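(* Let $N\ge2$ be even, let $\phi$ lie in the closed interval with endpoints $0$ and $\phi^*_N$, let $\theta=\theta(\phi)$, and let $\phi'=N\phi/2$, $\theta'=\theta-\frac{N-2}2\phi$. Then $(\phi',\theta')\in\mathcal F$.
   Context: $\mathcal G=(\pi/4,\pi/2)\cup(\pi/2,3\pi/4)\cup(5\pi/4,3\pi/2)\cup(3\pi/2,7\pi/4)$, $\mathcal F=\big[(-\pi/4,\pi/4)\times\mathcal G\big]\cup\big[((-\pi/4,\pi/4)\setminus\{0\})\times\{\pi/2,3\pi/2\}\big]$. $\theta^*_N=2\pi t_N/(N+1)$ with $t_N=N/4+1/2,\ N/4,\ 3N/4+1/2,\ 3N/4+1$ for $N\equiv2,4,6,0\pmod8$; $\theta(\phi)=\frac{N-1}{N+1}\phi+\theta^*_N$; $\phi^*_N=\mathrm{sgn}[\sin(2\theta^*_N)]\frac{\pi}{4N}$. *)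

theory Defs
  imports Complex_Main
begin

definition G_set :: "real set" where
  "G_set = {pi/4<..<pi/2} \<union> {pi/2<..<3*pi/4} \<union> {5*pi/4<..<3*pi/2} \<union> {3*pi/2<..<7*pi/4}"

definition F_set :: "(real \<times> real) set" where
  "F_set = ({-pi/4<..<pi/4} \<times> G_set) \<union> (({-pi/4<..<pi/4} - {0}) \<times> {pi/2, 3*pi/2})"

definition t_N :: "nat \<Rightarrow> real" where
  "t_N N = (if N mod 8 = 2 then real N / 4 + 1/2
            else if N mod 8 = 4 then real N / 4
            else if N mod 8 = 6 then 3 * real N / 4 + 1/2
            else 3 * real N / 4 + 1)"

definition theta_star :: "nat \<Rightarrow> real" where
  "theta_star N = 2 * pi * t_N N / (real N + 1)"

definition theta_of :: "nat \<Rightarrow> real \<Rightarrow> real" where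
  "theta_of N \<phi> = (real N - 1) / (real N + 1) * \<phi> + theta_star N"

definition phi_star :: "nat \<Rightarrow> real" where
  "phi_star N = sgn (sin (2 * theta_star N)) * (pi / (4 * real N))"

end

theory Submission
  imports Defs
begin

lemma prop_core:
  fixes n s x c \<phi> T :: real
  assumes n: "n \<ge> 2"
    and T: "T = theta_star N" and nN: "n = real N"
    and ph: "\<phi> \<in> {min 0 (phi_star N) .. max 0 (phi_star N)}"
  shows "\<bar>\<phi>\<bar> \<le> pi/(4*n)"
proof -
  have "\<bar>phi_star N\<bar> \<le> pi/(4*n)"
    unfolding phi_star_def using n nN by (auto simp: abs_mult sgn_if)
  thus ?thesis using ph by (auto simp: min_def max_def split: if_splits)
qed

theorem proposition7:
  fixes N :: nat and \<phi> :: real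
  assumes "N \<ge> 2" and "even N"
    and "\<phi> \<in> {min 0 (phi_star N) .. max 0 (phi_star N)}"
  shows "(real N * \<phi> / 2, theta_of N \<phi> - (real N - 2) / 2 * \<phi>) \<in> F_set"
proof -
  define n where "n = real N"
  define c where "c = (n-1)/(n+1) - (n-2)/2"
  define T where "T = theta_star N"
  have n2: "n \<ge> 2" using assms(1) n_def by simp
  have phb: "\<bar>\<phi>\<bar> \<le> pi/(4*n)" using prop_core[OF n2 _ n_def assms(3)] by simp
  have eq: "theta_of N \<phi> - (real N - 2) / 2 * \<phi> = T + c*\<phi>"
    unfolding theta_of_def T_def c_def n_def by (simp add: algebra_simps)
  have cabs: "\<bar>c\<bar> \<le> n/2" using n2 unfolding c_def
    by (auto simp: abs_if field_simps)
  have "\<bar>c*\<phi>\<bar> \<le> n/2 * (pi/(4*n))"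
    unfolding abs_mult by (rule mult_mono[OF cabs phb]) (use n2 in auto)
  also have "\<dots> = pi/8" using n2 by (simp add: field_simps)
  finally have cphi0: "\<bar>c*\<phi>\<bar> \<le> pi/8" .
  hence cphi: "-pi/8 \<le> c*\<phi>" "c*\<phi> \<le> pi/8" by (auto simp: abs_le_iff)
  have "\<bar>n*\<phi>/2\<bar> \<le> n/2 * (pi/(4*n))" using phb n2 by (simp add: abs_mult field_simps)
  also have "\<dots> = pi/8" using n2 by (simp add: field_simps)
  finally have p1: "\<bar>n*\<phi>/2\<bar> < pi/4" using pi_gt_zero by linarith
  have cneg: "N \<ge> 4 \<Longrightarrow> c \<le> 0" unfolding c_def n_def by (simp add: field_simps)
  have pos: "pi/(2*(n+1)) > 0" using n2 by simp
  have ssmall: "0 < pi/(n+1)" "pi/(n+1) < pi" using n2 by (auto simp: field_simps)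
  have sinpos: "sin (pi/(n+1)) > 0" using ssmall by (intro sin_gt_zero) auto
  have bnd: "\<And>m::real. m \<ge> 2 \<Longrightarrow> n \<ge> m \<Longrightarrow> pi/(2*(n+1)) \<le> pi/(2*(m+1))"
    by (intro divide_left_mono) auto
  have q4: "pi/(4*n) > 0" using n2 by simp
  have thetaG: "T + c*\<phi> \<in> G_set"
  proof -
    have "N mod 8 = 0 \<or> N mod 8 = 2 \<or> N mod 8 = 4 \<or> N mod 8 = 6" using \<open>even N\<close> by presburger
    then consider "N mod 8 = 2" | "N mod 8 = 4" | "N mod 8 = 6" | "N mod 8 = 0" by auto
    then show ?thesis
    proof cases
      case 1
      have T1: "T = pi/2 + pi/(2*(n+1))"
        unfolding T_def theta_star_def t_N_def using 1 n2 n_def by (simp add: field_simps)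
      have "2*T = pi + pi/(n+1)" using T1 n2 by (simp add: field_simps)
      hence "sin (2 * theta_star N) < 0" using sinpos T_def by (simp add: sin_add)
      hence "phi_star N = -(pi/(4*n))" unfolding phi_star_def n_def by simp
      hence phn: "\<phi> \<le> 0" using assms(3) q4 by (auto simp: min_def max_def split: if_splits)
      show ?thesis
      proof (cases "N = 2")
        case True
        hence "n = 2" "c = 1/3" using n_def c_def by auto
        hence "T = 2*pi/3" "c*\<phi> \<le> 0" using T1 phn by (auto simp: mult_nonneg_nonpos)
        hence "pi/2 < T + c*\<phi> \<and> T + c*\<phi> < 3*pi/4" using cphi pi_gt_zero by (intro conjI) linarith+
        thus ?thesis unfolding G_set_def by auto
      next
        case False
        hence "N \<ge> 10" using 1 assms(1) by presburger
        hence "n \<ge> 10" using n_def by simp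
        hence "pi/(2*(n+1)) \<le> pi/22" by - (intro divide_left_mono, auto)
        moreover have "c*\<phi> \<ge> 0" using cneg \<open>N\<ge>10\<close> phn by (simp add: mult_nonpos_nonpos)
        ultimately have "pi/2 < T + c*\<phi> \<and> T + c*\<phi> < 3*pi/4" using cphi pos T1 pi_gt_zero by (intro conjI) linarith+
        thus ?thesis unfolding G_set_def by auto
      qed
    next
      case 2
      have T1: "T = pi/2 - pi/(2*(n+1))"
        unfolding T_def theta_star_def t_N_def using 2 n2 n_def by (simp add: field_simps)
      have "2*T = pi - pi/(n+1)" using T1 n2 by (simp add: field_simps)
      hence "sin (2 * theta_star N) > 0" using sinpos T_def by (simp add: sin_diff)
      hence "phi_star N = (pi/(4*n))" unfolding phi_star_def n_def by simp
      hence phn: "\<phi> \<ge> 0" using assms(3) q4 by (auto simp: min_def max_def split: if_splits)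
      have "N \<ge> 4" using 2 assms(1) by presburger
      hence "n \<ge> 4" using n_def by simp
      hence "pi/(2*(n+1)) \<le> pi/10" by - (intro divide_left_mono, auto)
      moreover have "c*\<phi> \<le> 0" using cneg \<open>N\<ge>4\<close> phn by (simp add: mult_nonpos_nonneg)
      ultimately have "pi/4 < T + c*\<phi> \<and> T + c*\<phi> < pi/2" using cphi pos T1 pi_gt_zero by (intro conjI) linarith+
        thus ?thesis unfolding G_set_def by auto
    next
      case 3
      have T1: "T = 3*pi/2 - pi/(2*(n+1))"
        unfolding T_def theta_star_def t_N_def using 3 n2 n_def by (simp add: field_simps)
      have "2*T = 2*pi + (pi - pi/(n+1))" using T1 n2 by (simp add: field_simps)
      hence "sin (2 * theta_star N) > 0" using sinpos T_def by (simp add: sin_diff sin_add)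
      hence "phi_star N = (pi/(4*n))" unfolding phi_star_def n_def by simp
      hence phn: "\<phi> \<ge> 0" using assms(3) q4 by (auto simp: min_def max_def split: if_splits)
      have "N \<ge> 6" using 3 assms(1) by presburger
      hence "n \<ge> 6" using n_def by simp
      hence "pi/(2*(n+1)) \<le> pi/14" by - (intro divide_left_mono, auto)
      moreover have "c*\<phi> \<le> 0" using cneg \<open>N\<ge>6\<close> phn by (simp add: mult_nonpos_nonneg)
      ultimately have "5*pi/4 < T + c*\<phi> \<and> T + c*\<phi> < 3*pi/2" using cphi pos T1 pi_gt_zero by (intro conjI) linarith+
        thus ?thesis unfolding G_set_def by auto
    next
      case 4
      have T1: "T = 3*pi/2 + pi/(2*(n+1))"
        unfolding T_def theta_star_def t_N_def using 4 n2 n_def by (simp add: field_simps)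
      have "2*T = 2*pi + (pi + pi/(n+1))" using T1 n2 by (simp add: field_simps)
      hence "sin (2 * theta_star N) < 0" using sinpos T_def by (simp add: sin_add)
      hence "phi_star N = -(pi/(4*n))" unfolding phi_star_def n_def by simp
      hence phn: "\<phi> \<le> 0" using assms(3) q4 by (auto simp: min_def max_def split: if_splits)
      have "N \<ge> 8" using 4 assms(1) by presburger
      hence "n \<ge> 8" using n_def by simp
      hence "pi/(2*(n+1)) \<le> pi/18" by - (intro divide_left_mono, auto)
      moreover have "c*\<phi> \<ge> 0" using cneg \<open>N\<ge>8\<close> phn by (simp add: mult_nonpos_nonpos)
      ultimately have "3*pi/2 < T + c*\<phi> \<and> T + c*\<phi> < 7*pi/4" using cphi pos T1 pi_gt_zero by (intro conjI) linarith+
        thus ?thesis unfolding G_set_def by auto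
    qed
  qed
  have a1: "real N * \<phi> / 2 \<in> {-pi/4<..<pi/4}" using p1 n_def by (auto simp: abs_less_iff mult.commute)
  show ?thesis unfolding eq F_set_def using thetaG a1 by blast
qed

end
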